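(* Let $A$ be an abelian topological group and $D\le A$ a dense subgroup, and let $r\colon\hat A\to\hat D$ be the restriction map $\chi\mapsto\chi|_D$. Then: (a) $r$ is a bijective continuous homomorphism (every continuous character of $D$ extends uniquely to a continuous character of $A$); (b) if $\alpha_D$ is continuous, then a subset of $\hat A$ is compact if and only if its image under $r$ is compact in $\hat D$, and moreover $\alpha_A$ is continuous; (c) if $D$ is locally quasi-convex, then so is $A$.
   Context: $\mathbb{T}=\mathbb{R}/\mathbb{Z}$, $\Lambda_1$ is the image of $[-\tfrac14,\tfrac14]$ in $\mathbb{T}$. For an abelian topological group $A$, $\hat A$ is the group of continuous homomorphisms $A\to\mathbb{T}$ with the compact-open topology and $\alpha_A\colon A\to\hat{\hat A}$, $\alpha_A(a)(\chi)=\chi(a)$. For $S\subseteq A$, $S^\vartriangleright=\{\chi\in\hat A\mid\chi(S)\subseteq\Lambda_1\}$; for $\Phi\subseteq\hat A$, $\Phi^\vartriangleleft=\{a\in A\mid\chi(a)\in\Lambda_1\ \forall\chi\in\Phi\}$. $A$ is locally quasi-convex if $\{U^{\vartriangleright\vartriangleleft}\mid U \text{ a neighborhood of } 0\}$ is a base of neighborhoods of $0$ in $A$. *)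

theory Defs
  imports "HOL-Algebra.Group" "HOL-Analysis.Analysis"
begin

text \<open>The circle group T = R/Z, modelled (via t \<mapsto> exp(2 pi i t)) as the unit circle in C.\<close>

definition circle_group :: "complex monoid" where
  "circle_group = \<lparr>carrier = sphere 0 1, monoid.mult = (*), monoid.one = 1\<rparr>"

definition circle_top :: "complex topology" where
  "circle_top = top_of_set (sphere 0 1)"

definition Lambda1 :: "complex set" where
  "Lambda1 = (\<lambda>t. cis (2 * pi * t)) ` {-1/4..1/4}"

definition ab_top_group :: "'a monoid \<Rightarrow> 'a topology \<Rightarrow> bool" where
  "ab_top_group G T \<longleftrightarrow> comm_group G \<and> topspace T = carrier G
     \<and> continuous_map (prod_topology T T) T (\<lambda>p. fst p \<otimes>\<^bsub>G\<^esub> snd p)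
     \<and> continuous_map T T (\<lambda>x. inv\<^bsub>G\<^esub> x)"

definition characters :: "'a monoid \<Rightarrow> 'a topology \<Rightarrow> ('a \<Rightarrow> complex) set" where
  "characters G T = {ch. ch \<in> hom G circle_group \<and> continuous_map T circle_top ch
                         \<and> ch \<in> extensional (carrier G)}"

definition dual_group :: "'a monoid \<Rightarrow> 'a topology \<Rightarrow> ('a \<Rightarrow> complex) monoid" where
  "dual_group G T = \<lparr>carrier = characters G T,
      monoid.mult = (\<lambda>ch ps. \<lambda>x\<in>carrier G. ch x * ps x),
      monoid.one = (\<lambda>x\<in>carrier G. 1)\<rparr>"

definition dual_top :: "'a monoid \<Rightarrow> 'a topology \<Rightarrow> ('a \<Rightarrow> complex) topology" where
  "dual_top G T = topology_generated_by
     {{ch \<in> characters G T. ch ` K \<subseteq> U} | K U. compactin T K \<and> openin circle_top U}"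

definition bidual_top :: "'a monoid \<Rightarrow> 'a topology \<Rightarrow> (('a \<Rightarrow> complex) \<Rightarrow> complex) topology" where
  "bidual_top G T = dual_top (dual_group G T) (dual_top G T)"

definition eval_map :: "'a monoid \<Rightarrow> 'a topology \<Rightarrow> 'a \<Rightarrow> (('a \<Rightarrow> complex) \<Rightarrow> complex)" where
  "eval_map G T = (\<lambda>a. \<lambda>ch\<in>characters G T. ch a)"

definition polar :: "'a monoid \<Rightarrow> 'a topology \<Rightarrow> 'a set \<Rightarrow> ('a \<Rightarrow> complex) set" where
  "polar G T S = {ch \<in> characters G T. ch ` S \<subseteq> Lambda1}"

definition prepolar :: "'a monoid \<Rightarrow> 'a topology \<Rightarrow> ('a \<Rightarrow> complex) set \<Rightarrow> 'a set" where
  "prepolar G T \<Phi> = {a \<in> carrier G. \<forall>ch\<in>\<Phi>. ch a \<in> Lambda1}"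

definition nhd0 :: "'a monoid \<Rightarrow> 'a topology \<Rightarrow> 'a set \<Rightarrow> bool" where
  "nhd0 G T N \<longleftrightarrow> N \<subseteq> topspace T \<and> (\<exists>V. openin T V \<and> \<one>\<^bsub>G\<^esub> \<in> V \<and> V \<subseteq> N)"

definition locally_quasi_convex :: "'a monoid \<Rightarrow> 'a topology \<Rightarrow> bool" where
  "locally_quasi_convex G T \<longleftrightarrow>
     (\<forall>U. nhd0 G T U \<longrightarrow> nhd0 G T (prepolar G T (polar G T U))) \<and>
     (\<forall>W. nhd0 G T W \<longrightarrow> (\<exists>U. nhd0 G T U \<and> prepolar G T (polar G T U) \<subseteq> W))"

end

theory Submission
  imports Defs
begin

abbreviation S1 :: "complex set" where "S1 \<equiv> sphere 0 1"

lemma topspace_circle [simp]: "topspace circle_top = S1"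
  by (simp add: circle_top_def)

lemma openin_circle: "openin circle_top U \<longleftrightarrow> (\<exists>U'. open U' \<and> U = U' \<inter> S1)"
  by (simp add: circle_top_def openin_subtopology)

lemma cont_map_eucl_crit:
  assumes "\<forall>x\<in>topspace X. \<forall>e>0. \<exists>U. openin X U \<and> x\<in>U \<and> (\<forall>y\<in>U. dist (f y) (f x) < e)"
  shows "continuous_map X euclidean f"
  unfolding continuous_map_def
proof (intro conjI allI impI)
  show "f \<in> topspace X \<rightarrow> topspace euclidean" by simp
  fix U :: "'b set" assume "openin euclidean U"
  hence oU: "open U" by simp
  show "openin X {x \<in> topspace X. f x \<in> U}"
  proof (subst openin_subopen, intro ballI)
    fix x assume "x \<in> {x \<in> topspace X. f x \<in> U}"
    hence x: "x \<in> topspace X" "f x \<in> U" by auto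
    obtain e where e: "e > 0" "ball (f x) e \<subseteq> U" using oU x(2) open_contains_ball_eq by metis
    obtain W where W: "openin X W" "x \<in> W" "\<forall>y\<in>W. dist (f y) (f x) < e"
      using assms[rule_format, OF x(1) e(1)] by metis
    have "W \<subseteq> {x \<in> topspace X. f x \<in> U}"
    proof
      fix y assume y: "y \<in> W"
      hence "dist (f y) (f x) < e" using W(3) by blast
      hence "f y \<in> ball (f x) e" by (simp add: dist_commute)
      hence "f y \<in> U" using e(2) by blast
      thus "y \<in> {x \<in> topspace X. f x \<in> U}" using openin_subset[OF W(1)] y by auto
    qed
    thus "\<exists>T. openin X T \<and> x \<in> T \<and> T \<subseteq> {x \<in> topspace X. f x \<in> U}" using W by blast
  qed
qed

lemma cont_map_circle_crit:
  assumes "f \<in> topspace X \<rightarrow> S1"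
    "\<forall>x\<in>topspace X. \<forall>e>0. \<exists>U. openin X U \<and> x\<in>U \<and> (\<forall>y\<in>U. dist (f y) (f x) < e)"
  shows "continuous_map X circle_top f"
  unfolding circle_top_def continuous_map_in_subtopology
  using cont_map_eucl_crit[OF assms(2)] assms(1) by simp

lemma cont_circle_eucl: "continuous_map X circle_top f \<Longrightarrow> continuous_map X euclidean f"
  unfolding circle_top_def continuous_map_in_subtopology by simp

lemma Lambda1_eq: "Lambda1 = {z \<in> S1. Re z \<ge> 0}"
proof safe
  fix z assume "z \<in> Lambda1"
  then obtain t where t: "t \<in> {-1/4..1/4}" "z = cis (2*pi*t)" unfolding Lambda1_def by auto
  show "z \<in> S1" using t by simp
  have "2*pi*(-1/4) \<le> 2*pi*t" "2*pi*t \<le> 2*pi*(1/4)" using t(1) pi_gt_zero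
    by (intro mult_left_mono; simp)+
  hence "-(pi/2) \<le> 2*pi*t" "2*pi*t \<le> pi/2" by simp_all
  then show "0 \<le> Re z" using t by (simp add: cos_ge_zero)
next
  fix z :: complex assume z: "z \<in> S1" "0 \<le> Re z"
  have nz: "norm z = 1" using z by simp
  have ze: "z = cis (Arg z)" using rcis_cmod_Arg[of z] nz by (simp add: rcis_def)
  have a: "-pi < Arg z" "Arg z \<le> pi" using Arg_bounded by auto
  have "Re z = cos (Arg z)" using arg_cong[OF ze, of Re] by simp
  hence c: "cos (Arg z) \<ge> 0" using z by simp
  have "Arg z \<le> pi/2"
  proof (rule ccontr)
    assume "\<not> Arg z \<le> pi/2"
    hence "sin (Arg z - pi/2) > 0" using a by (intro sin_gt_zero) auto
    moreover have "sin (Arg z - pi/2) = - cos (Arg z)" by (simp add: sin_diff)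
    ultimately show False using c by simp
  qed
  moreover have "-(pi/2) \<le> Arg z"
  proof (rule ccontr)
    assume "\<not> -(pi/2) \<le> Arg z"
    hence "sin (- Arg z - pi/2) > 0" using a by (intro sin_gt_zero) auto
    moreover have "sin (- Arg z - pi/2) = - cos (Arg z)" by (simp add: sin_diff)
    ultimately show False using c by simp
  qed
  ultimately have "Arg z / (2*pi) \<in> {-1/4..1/4}" using pi_gt_zero
    by (auto simp: divide_simps)
  moreover have "2*pi*(Arg z / (2*pi)) = Arg z" by simp
  hence "z = cis (2*pi*(Arg z / (2*pi)))" by (metis ze)
  ultimately show "z \<in> Lambda1" unfolding Lambda1_def by blast
qed

lemma closedin_Lambda1: "closedin circle_top Lambda1"
proof -
  have "closed {z::complex. Re z \<ge> 0}" by (simp add: closed_halfspace_Re_ge)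
  hence "closedin (top_of_set S1) (S1 \<inter> {z::complex. Re z \<ge> 0})" by (rule closedin_closed_Int)
  moreover have "S1 \<inter> {z::complex. Re z \<ge> 0} = Lambda1" unfolding Lambda1_eq by blast
  ultimately show ?thesis unfolding circle_top_def by simp
qed

lemma dense_meet:
  assumes "X closure_of D = topspace X" "openin X Op" "x \<in> Op"
  shows "\<exists>d\<in>D. d \<in> Op"
proof -
  have "x \<in> X closure_of D" using assms(1) assms(3) openin_subset[OF assms(2)] by auto
  hence "\<forall>T. x \<in> T \<and> openin X T \<longrightarrow> (\<exists>y. y \<in> D \<and> y \<in> T)" by (simp add: in_closure_of)
  hence "\<exists>y. y \<in> D \<and> y \<in> Op" using assms(2,3) by simp
  thus ?thesis by (simp add: Bex_def)
qed

lemma dense_closed: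
  assumes "X closure_of D = topspace X" "openin X Op" "closedin X F" "Op \<inter> D \<subseteq> F"
  shows "Op \<subseteq> F"
proof
  fix x assume x: "x \<in> Op"
  show "x \<in> F"
  proof (rule ccontr)
    assume nx: "x \<notin> F"
    have oo: "openin X (Op - F)" using assms(2,3) by (simp add: openin_diff)
    have "x \<in> Op - F" using x nx by simp
    from dense_meet[OF assms(1) oo this] obtain d where "d \<in> D" "d \<in> Op - F" by (auto simp: Bex_def)
    thus False using assms(4) by (auto simp: subset_iff)
  qed
qed

locale atg =
  fixes G :: "'a monoid" (structure) and T :: "'a topology"
  assumes atg: "ab_top_group G T"
begin

sublocale comm_group G using atg unfolding ab_top_group_def by simp

lemma ts [simp]: "topspace T = carrier G"
  using atg unfolding ab_top_group_def by simp

lemma cmult: "continuous_map (prod_topology T T) T (\<lambda>p. fst p \<otimes> snd p)"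
  using atg unfolding ab_top_group_def by simp

lemma cinv: "continuous_map T T (\<lambda>x. inv x)"
  using atg unfolding ab_top_group_def by simp

lemma cont_ltrans: assumes "a \<in> carrier G" shows "continuous_map T T (\<lambda>y. a \<otimes> y)"
proof -
  have "continuous_map T (prod_topology T T) (\<lambda>y. (a, y))"
  proof (rule continuous_map_pairedI)
    show "continuous_map T T (\<lambda>y. a)" using assms by simp
    show "continuous_map T T (\<lambda>y. y)" using continuous_map_id by (simp add: id_def)
  qed
  from continuous_map_compose[OF this cmult] show ?thesis by (simp add: o_def)
qed

lemma cinvmult: "continuous_map (prod_topology T T) T (\<lambda>p. inv (fst p) \<otimes> snd p)"
proof -
  have "continuous_map (prod_topology T T) (prod_topology T T) (\<lambda>p. (inv (fst p), snd p))"
    by (intro continuous_map_pairedI continuous_map_compose[OF continuous_map_fst cinv, unfolded o_def]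
         continuous_map_snd)
  from continuous_map_compose[OF this cmult] show ?thesis by (simp add: o_def)
qed

definition nb :: "'a \<Rightarrow> 'a set \<Rightarrow> 'a set" where
  "nb x V = {y \<in> carrier G. inv x \<otimes> y \<in> V}"

lemma openin_nb: assumes "x \<in> carrier G" "openin T V" shows "openin T (nb x V)"
  using openin_continuous_map_preimage[OF cont_ltrans[of "inv x"] assms(2)] assms(1)
  unfolding nb_def by simp

lemma nb_self: "x \<in> carrier G \<Longrightarrow> \<one> \<in> V \<Longrightarrow> x \<in> nb x V"
  unfolding nb_def by simp

lemma box_lemma:
  assumes "continuous_map (prod_topology T T) T f" "f (\<one>, \<one>) \<in> V" "openin T V"
  shows "\<exists>W. openin T W \<and> \<one> \<in> W \<and> (\<forall>a\<in>W. \<forall>b\<in>W. f (a, b) \<in> V)"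
proof -
  define M where "M = {p \<in> topspace (prod_topology T T). f p \<in> V}"
  have oM: "openin (prod_topology T T) M"
    unfolding M_def by (rule openin_continuous_map_preimage[OF assms(1) assms(3)])
  have mM: "(\<one>, \<one>) \<in> M" using assms(2) unfolding M_def by simp
  have "\<exists>U1 U2. openin T U1 \<and> openin T U2 \<and> \<one> \<in> U1 \<and> \<one> \<in> U2 \<and> U1 \<times> U2 \<subseteq> M"
    using openin_prod_topology_alt[THEN iffD1, OF oM, rule_format, OF mM] .
  then obtain U1 U2 where U: "openin T U1" "openin T U2" "\<one> \<in> U1" "\<one> \<in> U2"
    "U1 \<times> U2 \<subseteq> M" by blast
  have "\<forall>a\<in>U1 \<inter> U2. \<forall>b\<in>U1 \<inter> U2. f (a, b) \<in> V"
  proof (intro ballI)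
    fix a b assume "a \<in> U1 \<inter> U2" "b \<in> U1 \<inter> U2"
    hence "(a, b) \<in> U1 \<times> U2" by simp
    hence "(a, b) \<in> M" using U(5) by (rule subsetD[rotated])
    thus "f (a, b) \<in> V" unfolding M_def by simp
  qed
  moreover have "openin T (U1 \<inter> U2)" using U by (simp add: openin_Int)
  moreover have "\<one> \<in> U1 \<inter> U2" using U by simp
  ultimately show ?thesis by blast
qed

lemma split_nbhd:
  assumes "openin T V" "\<one> \<in> V"
  shows "\<exists>W. openin T W \<and> \<one> \<in> W \<and> W \<subseteq> V \<and> (\<forall>a\<in>W. \<forall>b\<in>W. a \<otimes> b \<in> V \<and> inv a \<otimes> b \<in> V)"
proof -
  obtain W1 where W1: "openin T W1" "\<one> \<in> W1" "\<forall>a\<in>W1. \<forall>b\<in>W1. a \<otimes> b \<in> V"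
    using box_lemma[OF cmult _ assms(1)] assms(2) by auto
  obtain W2 where W2: "openin T W2" "\<one> \<in> W2" "\<forall>a\<in>W2. \<forall>b\<in>W2. inv a \<otimes> b \<in> V"
    using box_lemma[OF cinvmult _ assms(1)] assms(2) by auto
  have "openin T (W1 \<inter> W2 \<inter> V)" using W1 W2 assms by (simp add: openin_Int)
  moreover have "\<one> \<in> W1 \<inter> W2 \<inter> V" using W1 W2 assms by simp
  moreover have "\<forall>a\<in>W1 \<inter> W2 \<inter> V. \<forall>b\<in>W1 \<inter> W2 \<inter> V. a \<otimes> b \<in> V \<and> inv a \<otimes> b \<in> V"
    using W1(3) W2(3) by blast
  ultimately show ?thesis by (intro exI[of _ "W1 \<inter> W2 \<inter> V"]) blast
qed

lemma hom_circle:
  "ch \<in> hom G circle_group \<longleftrightarrow> ch \<in> carrier G \<rightarrow> S1 \<and> (\<forall>x\<in>carrier G. \<forall>y\<in>carrier G. ch (x \<otimes> y) = ch x * ch y)"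
  by (simp add: hom_def circle_group_def)

context
  fixes ch assumes ch: "ch \<in> hom G circle_group"
begin

lemma ch_S: "x \<in> carrier G \<Longrightarrow> ch x \<in> S1"
  using ch unfolding hom_circle by auto

lemma ch_norm: "x \<in> carrier G \<Longrightarrow> cmod (ch x) = 1"
  using ch_S by simp

lemma ch_mult: "x \<in> carrier G \<Longrightarrow> y \<in> carrier G \<Longrightarrow> ch (x \<otimes> y) = ch x * ch y"
  using ch unfolding hom_circle by auto

lemma ch_one: "ch \<one> = 1"
proof -
  have "ch \<one> = ch \<one> * ch \<one>" using ch_mult[of \<one> \<one>] by simp
  moreover have "ch \<one> \<noteq> 0" using ch_norm[of \<one>] by auto
  ultimately show ?thesis by (metis mult_cancel_left1)
qed

lemma ch_inv_mult: "x \<in> carrier G \<Longrightarrow> ch (inv x) * ch x = 1"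
  using ch_mult[of "inv x" x] ch_one by simp

lemma ch_shift: "x \<in> carrier G \<Longrightarrow> y \<in> carrier G \<Longrightarrow> ch y = ch x * ch (inv x \<otimes> y)"
proof -
  assume x: "x \<in> carrier G" and y: "y \<in> carrier G"
  have "x \<otimes> (inv x \<otimes> y) = y" using x y by (simp add: m_assoc[symmetric])
  thus ?thesis using ch_mult[of x "inv x \<otimes> y"] x y by simp
qed

lemma ch_dist: "x \<in> carrier G \<Longrightarrow> y \<in> carrier G \<Longrightarrow> cmod (ch y - ch x) = cmod (ch (inv x \<otimes> y) - 1)"
proof -
  assume x: "x \<in> carrier G" and y: "y \<in> carrier G"
  have "ch y - ch x = ch x * (ch (inv x \<otimes> y) - 1)"
    using ch_shift[OF x y] by (simp add: algebra_simps)
  hence "cmod (ch y - ch x) = cmod (ch x) * cmod (ch (inv x \<otimes> y) - 1)" by (simp add: norm_mult)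
  thus ?thesis using ch_norm[OF x] by simp
qed

end

lemma char_hom: "ch \<in> characters G T \<Longrightarrow> ch \<in> hom G circle_group"
  unfolding characters_def by simp

lemma char_cont: "ch \<in> characters G T \<Longrightarrow> continuous_map T circle_top ch"
  unfolding characters_def by simp

lemma char_ext: "ch \<in> characters G T \<Longrightarrow> ch \<in> extensional (carrier G)"
  unfolding characters_def by simp

lemma char_cont_at1:
  assumes "ch \<in> characters G T" "e > 0"
  shows "\<exists>V. openin T V \<and> \<one> \<in> V \<and> (\<forall>v\<in>V. cmod (ch v - 1) < e)"
proof -
  have c: "continuous_map T euclidean ch" using cont_circle_eucl[OF char_cont[OF assms(1)]] .
  have "openin T {x \<in> topspace T. ch x \<in> ball 1 e}"
    by (rule openin_continuous_map_preimage[OF c]) simp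
  moreover have "ch \<one> = 1" using ch_one[OF char_hom[OF assms(1)]] .
  ultimately show ?thesis using assms(2)
    by (intro exI[of _ "{x \<in> topspace T. ch x \<in> ball 1 e}"]) (auto simp: dist_norm norm_minus_commute)
qed

lemma char_intro:
  assumes "ch \<in> hom G circle_group" "ch \<in> extensional (carrier G)"
    "\<And>e. e > 0 \<Longrightarrow> \<exists>V. openin T V \<and> \<one> \<in> V \<and> (\<forall>v\<in>V. cmod (ch v - 1) < e)"
  shows "ch \<in> characters G T"
proof -
  have "continuous_map T circle_top ch"
  proof (rule cont_map_circle_crit)
    show "ch \<in> topspace T \<rightarrow> S1" using ch_S[OF assms(1)] by auto
    show "\<forall>x\<in>topspace T. \<forall>e>0. \<exists>U. openin T U \<and> x \<in> U \<and> (\<forall>y\<in>U. dist (ch y) (ch x) < e)"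
    proof (intro ballI allI impI)
      fix x e assume x: "x \<in> topspace T" and e: "(e::real) > 0"
      obtain V where V: "openin T V" "\<one> \<in> V" "\<forall>v\<in>V. cmod (ch v - 1) < e" using assms(3)[OF e] by blast
      show "\<exists>U. openin T U \<and> x \<in> U \<and> (\<forall>y\<in>U. dist (ch y) (ch x) < e)"
      proof (intro exI conjI ballI)
        show "openin T (nb x V)" using openin_nb x V by simp
        show "x \<in> nb x V" using nb_self x V by simp
        fix y assume "y \<in> nb x V"
        hence y: "y \<in> carrier G" "inv x \<otimes> y \<in> V" unfolding nb_def by auto
        have "dist (ch y) (ch x) = cmod (ch (inv x \<otimes> y) - 1)"
          using ch_dist[OF assms(1), of x y] x y by (simp add: dist_norm)
        thus "dist (ch y) (ch x) < e" using V y by simp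
      qed
    qed
  qed
  thus ?thesis using assms unfolding characters_def by simp
qed

end

context atg
begin

lemma inv_shift1: "x \<in> carrier G \<Longrightarrow> d \<in> carrier G \<Longrightarrow> d' \<in> carrier G \<Longrightarrow>
  inv (inv x \<otimes> d) \<otimes> (inv x \<otimes> d') = inv d \<otimes> d'"
proof -
  assume x: "x \<in> carrier G" and d: "d \<in> carrier G" and d': "d' \<in> carrier G"
  have "inv (inv x \<otimes> d) = inv d \<otimes> x" using x d by (simp add: inv_mult_group)
  hence "inv (inv x \<otimes> d) \<otimes> (inv x \<otimes> d') = inv d \<otimes> (x \<otimes> (inv x \<otimes> d'))"
    using x d d' by (simp add: m_assoc)
  also have "x \<otimes> (inv x \<otimes> d') = d'" using x d' by (simp add: m_assoc[symmetric])
  finally show ?thesis .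
qed

lemma inv_shift2: "x \<in> carrier G \<Longrightarrow> y \<in> carrier G \<Longrightarrow> d1 \<in> carrier G \<Longrightarrow> d \<in> carrier G \<Longrightarrow>
  inv (inv x \<otimes> d1) \<otimes> (inv (x \<otimes> y) \<otimes> d) = inv y \<otimes> (inv d1 \<otimes> d)"
proof -
  assume x: "x \<in> carrier G" and y: "y \<in> carrier G" and d1: "d1 \<in> carrier G" and d: "d \<in> carrier G"
  have "inv (x \<otimes> y) \<otimes> d = inv x \<otimes> (inv y \<otimes> d)" using x y d by (simp add: inv_mult m_assoc)
  hence "inv (inv x \<otimes> d1) \<otimes> (inv (x \<otimes> y) \<otimes> d) = inv d1 \<otimes> (inv y \<otimes> d)"
    using inv_shift1[of x d1 "inv y \<otimes> d"] x y d d1 by simp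
  also have "\<dots> = inv y \<otimes> (inv d1 \<otimes> d)" using y d d1 by (simp add: m_lcomm)
  finally show ?thesis .
qed

end

locale dsub = atg G T for G (structure) and T +
  fixes D
  assumes sub: "subgroup D G" and dense: "T closure_of D = topspace T"
begin

abbreviation "GD \<equiv> G\<lparr>carrier := D\<rparr>"
abbreviation "TD \<equiv> subtopology T D"

lemma Dsub: "D \<subseteq> carrier G" by (rule subgroup.subset[OF sub])

lemma D_mult: "a \<in> D \<Longrightarrow> b \<in> D \<Longrightarrow> a \<otimes> b \<in> D" by (rule subgroup.m_closed[OF sub])
lemma D_inv: "a \<in> D \<Longrightarrow> inv a \<in> D" by (rule subgroup.m_inv_closed[OF sub])
lemma D_one: "\<one> \<in> D" by (rule subgroup.one_closed[OF sub])
lemma inv_GD: "a \<in> D \<Longrightarrow> inv\<^bsub>GD\<^esub> a = inv a" using m_inv_consistent[OF sub] by simp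

lemma atg_D: "ab_top_group GD TD"
  unfolding ab_top_group_def
proof (intro conjI)
  have "group GD" using subgroup_imp_group[OF sub] .
  thus "comm_group GD"
    by (rule group.group_comm_groupI) (use Dsub m_comm in auto)
  show "topspace TD = carrier GD" using Dsub by auto
  have pt: "prod_topology TD TD = subtopology (prod_topology T T) (D \<times> D)"
    by (simp add: subtopology_Times)
  show "continuous_map (prod_topology TD TD) TD (\<lambda>p. fst p \<otimes>\<^bsub>GD\<^esub> snd p)"
    unfolding pt continuous_map_in_subtopology
  proof
    show "continuous_map (subtopology (prod_topology T T) (D \<times> D)) T (\<lambda>p. fst p \<otimes>\<^bsub>GD\<^esub> snd p)"
      using continuous_map_from_subtopology[OF cmult] by simp
    show "(\<lambda>p. fst p \<otimes>\<^bsub>GD\<^esub> snd p) \<in> topspace (subtopology (prod_topology T T) (D \<times> D)) \<rightarrow> D"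
      using D_mult by auto
  qed
  show "continuous_map TD TD (\<lambda>x. inv\<^bsub>GD\<^esub> x)"
    unfolding continuous_map_in_subtopology
  proof
    have "continuous_map TD T (\<lambda>x. inv x)" using continuous_map_from_subtopology[OF cinv] .
    thus "continuous_map TD T (\<lambda>x. inv\<^bsub>GD\<^esub> x)"
      by (rule continuous_map_eq) (simp add: inv_GD)
    show "(\<lambda>x. inv\<^bsub>GD\<^esub> x) \<in> topspace TD \<rightarrow> D" using D_inv inv_GD by auto
  qed
qed

end

sublocale dsub \<subseteq> DD: atg "G\<lparr>carrier := D\<rparr>" "subtopology T D"
  by (unfold_locales) (rule atg_D)

context dsub
begin

lemma openin_TD: "openin TD V \<longleftrightarrow> (\<exists>O'. openin T O' \<and> V = O' \<inter> D)"
  by (simp add: openin_subtopology)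

lemma chD_cont_at1:
  assumes "\<psi> \<in> characters GD TD" "e > 0"
  shows "\<exists>O'. openin T O' \<and> \<one> \<in> O' \<and> (\<forall>v\<in>D. v \<in> O' \<longrightarrow> cmod (\<psi> v - 1) < e)"
proof -
  obtain V where V: "openin TD V" "\<one> \<in> V" "\<forall>v\<in>V. cmod (\<psi> v - 1) < e"
    using DD.char_cont_at1[OF assms] by auto
  then obtain O' where O': "openin T O'" "V = O' \<inter> D" using openin_TD by blast
  show ?thesis using V O' by (intro exI[of _ O']) auto
qed

lemma chD_hom: "\<psi> \<in> characters GD TD \<Longrightarrow> \<psi> \<in> hom GD circle_group"
  using DD.char_hom by simp

lemma chD_S: "\<psi> \<in> characters GD TD \<Longrightarrow> d \<in> D \<Longrightarrow> \<psi> d \<in> S1"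
  using DD.ch_S[OF chD_hom] by simp

lemma chD_mult: "\<psi> \<in> characters GD TD \<Longrightarrow> a \<in> D \<Longrightarrow> b \<in> D \<Longrightarrow> \<psi> (a \<otimes> b) = \<psi> a * \<psi> b"
  using DD.ch_mult[OF chD_hom] by simp

lemma chD_dist: "\<psi> \<in> characters GD TD \<Longrightarrow> a \<in> D \<Longrightarrow> b \<in> D \<Longrightarrow>
   cmod (\<psi> b - \<psi> a) = cmod (\<psi> (inv a \<otimes> b) - 1)"
  using DD.ch_dist[OF chD_hom] inv_GD by simp

definition Pz :: "('a \<Rightarrow> complex) \<Rightarrow> 'a \<Rightarrow> complex \<Rightarrow> bool" where
  "Pz \<psi> x z \<longleftrightarrow> (\<forall>e>0. \<exists>V. openin T V \<and> \<one> \<in> V \<and> (\<forall>d\<in>D. inv x \<otimes> d \<in> V \<longrightarrow> cmod (\<psi> d - z) \<le> e))"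

lemma dense_nb:
  assumes "x \<in> carrier G" "openin T V" "\<one> \<in> V"
  shows "\<exists>d\<in>D. inv x \<otimes> d \<in> V"
proof -
  have "openin T (nb x V)" using openin_nb assms by simp
  from dense_meet[OF dense this nb_self[OF assms(1) assms(3)]]
  show ?thesis unfolding nb_def by auto
qed

lemma Pz_unique:
  assumes x: "x \<in> carrier G" and P1: "Pz \<psi> x z1" and P2: "Pz \<psi> x z2"
  shows "z1 = z2"
proof (rule ccontr)
  assume ne: "z1 \<noteq> z2"
  define e where "e = cmod (z1 - z2) / 3"
  have e: "e > 0" using ne unfolding e_def by simp
  obtain V1 where V1: "openin T V1" "\<one> \<in> V1" "\<forall>d\<in>D. inv x \<otimes> d \<in> V1 \<longrightarrow> cmod (\<psi> d - z1) \<le> e"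
    using P1 e unfolding Pz_def by blast
  obtain V2 where V2: "openin T V2" "\<one> \<in> V2" "\<forall>d\<in>D. inv x \<otimes> d \<in> V2 \<longrightarrow> cmod (\<psi> d - z2) \<le> e"
    using P2 e unfolding Pz_def by blast
  have "openin T (V1 \<inter> V2)" using V1 V2 by (simp add: openin_Int)
  then obtain d where d: "d \<in> D" "inv x \<otimes> d \<in> V1 \<inter> V2" using dense_nb[OF x] V1 V2 by blast
  have a: "cmod (\<psi> d - z1) \<le> e" using V1(3) d by blast
  have b: "cmod (\<psi> d - z2) \<le> e" using V2(3) d by blast
  have "cmod (z1 - z2) \<le> cmod (\<psi> d - z1) + cmod (\<psi> d - z2)"
    using norm_triangle_ineq4[of "\<psi> d - z2" "\<psi> d - z1"] by (simp add: norm_minus_commute)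
  also have "\<dots> \<le> 2 * e" using a b by simp
  finally show False using e unfolding e_def by simp
qed

lemma Pz_char:
  assumes ch: "ch \<in> characters G T" and x: "x \<in> carrier G"
  shows "Pz (restrict ch D) x (ch x)"
  unfolding Pz_def
proof (intro allI impI)
  fix e :: real assume e: "e > 0"
  obtain V where V: "openin T V" "\<one> \<in> V" "\<forall>v\<in>V. cmod (ch v - 1) < e"
    using char_cont_at1[OF ch e] by blast
  show "\<exists>V. openin T V \<and> \<one> \<in> V \<and> (\<forall>d\<in>D. inv x \<otimes> d \<in> V \<longrightarrow> cmod (restrict ch D d - ch x) \<le> e)"
  proof (intro exI conjI ballI impI)
    fix d assume d: "d \<in> D" "inv x \<otimes> d \<in> V"
    have "cmod (ch d - ch x) = cmod (ch (inv x \<otimes> d) - 1)"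
      using ch_dist[OF char_hom[OF ch] x] d Dsub by auto
    also have "\<dots> < e" using V(3) d(2) by blast
    finally show "cmod (restrict ch D d - ch x) \<le> e" using d by simp
  qed (use V in auto)
qed

end

lemma prod_close:
  fixes a b c d :: complex
  assumes "cmod b = 1" "cmod c = 1"
  shows "cmod (a * b - c * d) \<le> cmod (a - c) + cmod (b - d)"
proof -
  have "a * b - c * d = (a - c) * b + c * (b - d)" by (simp add: algebra_simps)
  hence "cmod (a * b - c * d) \<le> cmod ((a - c) * b) + cmod (c * (b - d))"
    by (metis norm_triangle_ineq)
  also have "\<dots> = cmod (a - c) + cmod (b - d)" using assms by (simp add: norm_mult)
  finally show ?thesis .
qed

context dsub
begin

lemma Pz_exists:
  assumes psi: "\<psi> \<in> characters GD TD" and x: "x \<in> carrier G"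
  shows "\<exists>z\<in>S1. Pz \<psi> x z"
proof -
  define I where "I = {V. openin T V \<and> \<one> \<in> V}"
  define f where "f V = closure (\<psi> ` (D \<inter> nb x V))" for V
  have "S1 \<inter> (\<Inter>V\<in>I. f V) \<noteq> {}"
  proof (rule compact_imp_fip_image)
    show "compact S1" by simp
    show "closed (f V)" for V unfolding f_def by simp
    fix I' assume I': "finite I'" "I' \<subseteq> I"
    define V0 where "V0 = (\<Inter>V\<in>I'. V) \<inter> topspace T"
    have oV0: "openin T V0" unfolding V0_def
      by (rule openin_INT[OF I'(1)]) (use I' in \<open>auto simp: I_def\<close>)
    have "\<one> \<in> V0" unfolding V0_def using I' by (auto simp: I_def)
    then obtain d where d: "d \<in> D" "inv x \<otimes> d \<in> V0" using dense_nb[OF x oV0] by blast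
    have dc: "d \<in> carrier G" using d Dsub by blast
    have "\<psi> d \<in> S1" using chD_S[OF psi d(1)] .
    moreover have "\<psi> d \<in> f V" if "V \<in> I'" for V
    proof -
      have "inv x \<otimes> d \<in> V" using d(2) that unfolding V0_def by simp
      hence "d \<in> D \<inter> nb x V" using d(1) dc unfolding nb_def by blast
      hence "\<psi> d \<in> \<psi> ` (D \<inter> nb x V)" by (rule imageI)
      thus ?thesis unfolding f_def by (rule subsetD[OF closure_subset])
    qed
    ultimately have "\<psi> d \<in> S1 \<inter> (\<Inter>V\<in>I'. f V)" by simp
    thus "S1 \<inter> (\<Inter>V\<in>I'. f V) \<noteq> {}" by (simp add: ex_in_conv[symmetric]) blast
  qed
  then obtain z where z: "z \<in> S1" "\<And>V. V \<in> I \<Longrightarrow> z \<in> f V" by blast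
  have "Pz \<psi> x z"
    unfolding Pz_def
  proof (intro allI impI)
    fix e :: real assume e: "e > 0"
    obtain O' where O': "openin T O'" "\<one> \<in> O'" "\<forall>v\<in>D. v \<in> O' \<longrightarrow> cmod (\<psi> v - 1) < e"
      using chD_cont_at1[OF psi e] by blast
    obtain W where W: "openin T W" "\<one> \<in> W" "W \<subseteq> O'" "\<forall>a\<in>W. \<forall>b\<in>W. a \<otimes> b \<in> O' \<and> inv a \<otimes> b \<in> O'"
      using split_nbhd[OF O'(1) O'(2)] by blast
    have WI: "W \<in> I" using W unfolding I_def by blast
    show "\<exists>V. openin T V \<and> \<one> \<in> V \<and> (\<forall>d\<in>D. inv x \<otimes> d \<in> V \<longrightarrow> cmod (\<psi> d - z) \<le> e)"
    proof (intro exI conjI ballI impI)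
      fix d assume d: "d \<in> D" "inv x \<otimes> d \<in> W"
      have dc: "d \<in> carrier G" using d Dsub by blast
      have "\<psi> ` (D \<inter> nb x W) \<subseteq> cball (\<psi> d) e"
      proof
        fix w assume "w \<in> \<psi> ` (D \<inter> nb x W)"
        then obtain d' where d': "d' \<in> D" "d' \<in> nb x W" "w = \<psi> d'" by blast
        have d'c: "d' \<in> carrier G" "inv x \<otimes> d' \<in> W" using d' unfolding nb_def by auto
        have "inv (inv x \<otimes> d) \<otimes> (inv x \<otimes> d') \<in> O'" using W(4) d(2) d'c(2) by blast
        hence inO: "inv d \<otimes> d' \<in> O'" using inv_shift1[OF x dc d'c(1)] by simp
        have inD: "inv d \<otimes> d' \<in> D" using D_mult[OF D_inv[OF d(1)] d'(1)] .
        have "cmod (\<psi> d' - \<psi> d) = cmod (\<psi> (inv d \<otimes> d') - 1)" using chD_dist[OF psi d(1) d'(1)] .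
        also have "\<dots> < e" using O'(3) inO inD by blast
        finally show "w \<in> cball (\<psi> d) e" using d'(3) by (simp add: dist_norm norm_minus_commute)
      qed
      hence "f W \<subseteq> cball (\<psi> d) e" unfolding f_def by (intro closure_minimal) auto
      hence "z \<in> cball (\<psi> d) e" using z(2)[OF WI] by blast
      thus "cmod (\<psi> d - z) \<le> e" by (simp add: dist_norm)
    qed (use W in auto)
  qed
  thus ?thesis using z(1) by blast
qed

definition ext :: "('a \<Rightarrow> complex) \<Rightarrow> 'a \<Rightarrow> complex" where
  "ext \<psi> = (\<lambda>x\<in>carrier G. THE z. Pz \<psi> x z)"

lemma ext_Pz:
  assumes psi: "\<psi> \<in> characters GD TD" and x: "x \<in> carrier G"
  shows "Pz \<psi> x (ext \<psi> x)" "ext \<psi> x \<in> S1"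
proof -
  obtain z where z: "z \<in> S1" "Pz \<psi> x z" using Pz_exists[OF psi x] by blast
  have "(THE z. Pz \<psi> x z) = z" using z(2) Pz_unique[OF x] by (intro the_equality) blast+
  hence e: "ext \<psi> x = z" unfolding ext_def using x by simp
  show "Pz \<psi> x (ext \<psi> x)" "ext \<psi> x \<in> S1" using e z by simp_all
qed

lemma ext_eq:
  assumes psi: "\<psi> \<in> characters GD TD" and x: "x \<in> carrier G" and P: "Pz \<psi> x z"
  shows "ext \<psi> x = z"
  using Pz_unique[OF x ext_Pz(1)[OF psi x] P] .

lemma ext_on_D:
  assumes psi: "\<psi> \<in> characters GD TD" and d: "d \<in> D"
  shows "ext \<psi> d = \<psi> d"
proof -
  have dc: "d \<in> carrier G" using d Dsub by blast
  have "Pz \<psi> d (\<psi> d)"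
    unfolding Pz_def
  proof (intro allI impI)
    fix e :: real assume e: "e > 0"
    obtain O' where O': "openin T O'" "\<one> \<in> O'" "\<forall>v\<in>D. v \<in> O' \<longrightarrow> cmod (\<psi> v - 1) < e"
      using chD_cont_at1[OF psi e] by blast
    show "\<exists>V. openin T V \<and> \<one> \<in> V \<and> (\<forall>d'\<in>D. inv d \<otimes> d' \<in> V \<longrightarrow> cmod (\<psi> d' - \<psi> d) \<le> e)"
    proof (intro exI conjI ballI impI)
      fix d' assume d': "d' \<in> D" "inv d \<otimes> d' \<in> O'"
      have inD: "inv d \<otimes> d' \<in> D" using D_mult[OF D_inv[OF d] d'(1)] .
      have "cmod (\<psi> d' - \<psi> d) = cmod (\<psi> (inv d \<otimes> d') - 1)" using chD_dist[OF psi d d'(1)] .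
      also have "\<dots> < e" using O'(3) d'(2) inD by blast
      finally show "cmod (\<psi> d' - \<psi> d) \<le> e" by simp
    qed (use O' in auto)
  qed
  thus ?thesis using ext_eq[OF psi dc] by blast
qed

lemma ext_mult:
  assumes psi: "\<psi> \<in> characters GD TD" and x: "x \<in> carrier G" and y: "y \<in> carrier G"
  shows "ext \<psi> (x \<otimes> y) = ext \<psi> x * ext \<psi> y"
proof -
  have xy: "x \<otimes> y \<in> carrier G" using x y by simp
  have "Pz \<psi> (x \<otimes> y) (ext \<psi> x * ext \<psi> y)"
    unfolding Pz_def
  proof (intro allI impI)
    fix e :: real assume e: "e > 0"
    hence e2: "e/2 > 0" by simp
    obtain Vx where Vx: "openin T Vx" "\<one> \<in> Vx" "\<forall>d\<in>D. inv x \<otimes> d \<in> Vx \<longrightarrow> cmod (\<psi> d - ext \<psi> x) \<le> e/2"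
      using ext_Pz(1)[OF psi x] e2 unfolding Pz_def by blast
    obtain Vy where Vy: "openin T Vy" "\<one> \<in> Vy" "\<forall>d\<in>D. inv y \<otimes> d \<in> Vy \<longrightarrow> cmod (\<psi> d - ext \<psi> y) \<le> e/2"
      using ext_Pz(1)[OF psi y] e2 unfolding Pz_def by blast
    obtain W where W: "openin T W" "\<one> \<in> W" "W \<subseteq> Vy" "\<forall>a\<in>W. \<forall>b\<in>W. a \<otimes> b \<in> Vy \<and> inv a \<otimes> b \<in> Vy"
      using split_nbhd[OF Vy(1) Vy(2)] by blast
    show "\<exists>V. openin T V \<and> \<one> \<in> V \<and> (\<forall>d\<in>D. inv (x \<otimes> y) \<otimes> d \<in> V \<longrightarrow> cmod (\<psi> d - ext \<psi> x * ext \<psi> y) \<le> e)"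
    proof (intro exI conjI ballI impI)
      fix d assume d: "d \<in> D" "inv (x \<otimes> y) \<otimes> d \<in> W"
      have dc: "d \<in> carrier G" using d Dsub by blast
      have "openin T (Vx \<inter> W)" using Vx W by (simp add: openin_Int)
      then obtain d1 where d1: "d1 \<in> D" "inv x \<otimes> d1 \<in> Vx \<inter> W" using dense_nb[OF x] Vx W by blast
      have d1c: "d1 \<in> carrier G" using d1 Dsub by blast
      define d2 where "d2 = inv d1 \<otimes> d"
      have d2D: "d2 \<in> D" unfolding d2_def using D_mult[OF D_inv[OF d1(1)] d(1)] .
      have "inv (inv x \<otimes> d1) \<otimes> (inv (x \<otimes> y) \<otimes> d) \<in> Vy" using W(4) d1(2) d(2) by blast
      hence d2V: "inv y \<otimes> d2 \<in> Vy" unfolding d2_def using inv_shift2[OF x y d1c dc] by simp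
      have "d1 \<otimes> d2 = d" unfolding d2_def using d1c dc by (simp add: m_assoc[symmetric])
      hence pd: "\<psi> d = \<psi> d1 * \<psi> d2" using chD_mult[OF psi d1(1) d2D] by simp
      have a1: "cmod (\<psi> d1 - ext \<psi> x) \<le> e/2" using Vx(3) d1 by blast
      have a2: "cmod (\<psi> d2 - ext \<psi> y) \<le> e/2" using Vy(3) d2D d2V by blast
      have "cmod (\<psi> d1 * \<psi> d2 - ext \<psi> x * ext \<psi> y) \<le> cmod (\<psi> d1 - ext \<psi> x) + cmod (\<psi> d2 - ext \<psi> y)"
        by (rule prod_close) (use chD_S[OF psi d2D] ext_Pz(2)[OF psi x] in simp_all)
      thus "cmod (\<psi> d - ext \<psi> x * ext \<psi> y) \<le> e" using pd a1 a2 by simp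
    qed (use W in auto)
  qed
  thus ?thesis using ext_eq[OF psi xy] by blast
qed

lemma ext_char:
  assumes psi: "\<psi> \<in> characters GD TD"
  shows "ext \<psi> \<in> characters G T"
proof (rule char_intro)
  show "ext \<psi> \<in> hom G circle_group"
    unfolding hom_circle using ext_Pz(2)[OF psi] ext_mult[OF psi] by auto
  show "ext \<psi> \<in> extensional (carrier G)" unfolding ext_def by simp
  fix e :: real assume e: "e > 0"
  hence e2: "e/2 > 0" and e4: "e/4 > 0" by simp_all
  obtain O' where O': "openin T O'" "\<one> \<in> O'" "\<forall>v\<in>D. v \<in> O' \<longrightarrow> cmod (\<psi> v - 1) < e/2"
    using chD_cont_at1[OF psi e2] by blast
  obtain W where W: "openin T W" "\<one> \<in> W" "W \<subseteq> O'" "\<forall>a\<in>W. \<forall>b\<in>W. a \<otimes> b \<in> O' \<and> inv a \<otimes> b \<in> O'"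
    using split_nbhd[OF O'(1) O'(2)] by blast
  show "\<exists>V. openin T V \<and> \<one> \<in> V \<and> (\<forall>v\<in>V. cmod (ext \<psi> v - 1) < e)"
  proof (intro exI conjI ballI)
    fix v assume v: "v \<in> W"
    have vc: "v \<in> carrier G" using v openin_subset[OF W(1)] by auto
    obtain Vv where Vv: "openin T Vv" "\<one> \<in> Vv" "\<forall>d\<in>D. inv v \<otimes> d \<in> Vv \<longrightarrow> cmod (\<psi> d - ext \<psi> v) \<le> e/4"
      using ext_Pz(1)[OF psi vc] e4 unfolding Pz_def by blast
    have "openin T (Vv \<inter> W)" using Vv W by (simp add: openin_Int)
    then obtain d where d: "d \<in> D" "inv v \<otimes> d \<in> Vv \<inter> W" using dense_nb[OF vc] Vv W by blast
    have dc: "d \<in> carrier G" using d Dsub by blast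
    have "v \<otimes> (inv v \<otimes> d) \<in> O'" using W(4) v d(2) by blast
    hence "d \<in> O'" using vc dc by (simp add: m_assoc[symmetric])
    hence a1: "cmod (\<psi> d - 1) < e/2" using O'(3) d(1) by blast
    have a2: "cmod (\<psi> d - ext \<psi> v) \<le> e/4" using Vv(3) d by blast
    have "cmod (ext \<psi> v - 1) \<le> cmod (\<psi> d - ext \<psi> v) + cmod (\<psi> d - 1)"
      using norm_triangle_ineq4[of "\<psi> d - 1" "\<psi> d - ext \<psi> v"] by (simp add: norm_minus_commute)
    thus "cmod (ext \<psi> v - 1) < e" using a1 a2 e by linarith
  qed (use W in auto)
qed

lemma restrict_ext:
  assumes psi: "\<psi> \<in> characters GD TD"
  shows "restrict (ext \<psi>) D = \<psi>"
proof
  fix d show "restrict (ext \<psi>) D d = \<psi> d"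
  proof (cases "d \<in> D")
    case True thus ?thesis using ext_on_D[OF psi] by simp
  next
    case False
    have "\<psi> \<in> extensional D" using DD.char_ext[OF psi] by simp
    thus ?thesis using False by (simp add: extensional_def)
  qed
qed

lemma restrict_char:
  assumes ch: "ch \<in> characters G T"
  shows "restrict ch D \<in> characters GD TD"
proof (rule DD.char_intro)
  show "restrict ch D \<in> hom GD circle_group"
    unfolding DD.hom_circle using ch_S[OF char_hom[OF ch]] ch_mult[OF char_hom[OF ch]] Dsub D_mult
    by auto
  show "restrict ch D \<in> extensional (carrier GD)" by simp
  fix e :: real assume e: "e > 0"
  obtain V where V: "openin T V" "\<one> \<in> V" "\<forall>v\<in>V. cmod (ch v - 1) < e"
    using char_cont_at1[OF ch e] by blast
  show "\<exists>V. openin TD V \<and> \<one>\<^bsub>GD\<^esub> \<in> V \<and> (\<forall>v\<in>V. cmod (restrict ch D v - 1) < e)"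
    apply (rule exI[of _ "V \<inter> D"])
    using V D_one unfolding openin_TD by auto
qed

lemma ext_restrict:
  assumes ch: "ch \<in> characters G T"
  shows "ext (restrict ch D) = ch"
proof
  fix x show "ext (restrict ch D) x = ch x"
  proof (cases "x \<in> carrier G")
    case True
    show ?thesis using ext_eq[OF restrict_char[OF ch] True Pz_char[OF ch True]] by simp
  next
    case False
    thus ?thesis using char_ext[OF ch] unfolding ext_def by (simp add: extensional_def)
  qed
qed

lemma r_bij: "bij_betw (\<lambda>ch. restrict ch D) (characters G T) (characters GD TD)"
  by (rule bij_betw_byWitness[where f' = ext])
     (auto simp: ext_restrict restrict_ext restrict_char ext_char)

end

lemma subbasis_dual_Union:
  "\<Union>{{ch \<in> characters G T. ch ` K \<subseteq> U} | K U. compactin T K \<and> openin circle_top U} = characters G T"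
proof (rule equalityI)
  show "\<Union>{{ch \<in> characters G T. ch ` K \<subseteq> U} | K U. compactin T K \<and> openin circle_top U} \<subseteq> characters G T"
    by auto
  show "characters G T \<subseteq> \<Union>{{ch \<in> characters G T. ch ` K \<subseteq> U} | K U. compactin T K \<and> openin circle_top U}"
  proof
    fix ch assume ch: "ch \<in> characters G T"
    have "{ch \<in> characters G T. ch ` {} \<subseteq> S1} \<in> {{ch \<in> characters G T. ch ` K \<subseteq> U} | K U. compactin T K \<and> openin circle_top U}"
      using openin_topspace[of circle_top] by (intro CollectI exI[of _ "{}"] exI[of _ S1]) simp
    moreover have "ch \<in> {ch \<in> characters G T. ch ` {} \<subseteq> S1}" using ch by simp
    ultimately show "ch \<in> \<Union>{{ch \<in> characters G T. ch ` K \<subseteq> U} | K U. compactin T K \<and> openin circle_top U}"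
      by (rule UnionI)
  qed
qed

lemma topspace_dual [simp]: "topspace (dual_top G T) = characters G T"
  unfolding dual_top_def topology_generated_by_topspace by (rule subbasis_dual_Union)

lemma openin_dual_basic:
  assumes "compactin T K" "openin circle_top U"
  shows "openin (dual_top G T) {ch \<in> characters G T. ch ` K \<subseteq> U}"
  unfolding dual_top_def
  by (rule topology_generated_by_Basis) (use assms in blast)

lemma cont_into_dual:
  assumes "f \<in> topspace X \<rightarrow> characters G T"
    "\<And>K U. compactin T K \<Longrightarrow> openin circle_top U \<Longrightarrow> openin X {x \<in> topspace X. f x ` K \<subseteq> U}"
  shows "continuous_map X (dual_top G T) f"
  unfolding dual_top_def
proof (rule continuous_on_generated_topo)
  show "f ` topspace X \<subseteq> \<Union>{{ch \<in> characters G T. ch ` K \<subseteq> U} | K U. compactin T K \<and> openin circle_top U}"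
    unfolding subbasis_dual_Union using assms(1) by auto
  fix B assume "B \<in> {{ch \<in> characters G T. ch ` K \<subseteq> U} | K U. compactin T K \<and> openin circle_top U}"
  then obtain K U where KU: "B = {ch \<in> characters G T. ch ` K \<subseteq> U}" "compactin T K" "openin circle_top U"
    by blast
  have "f -` B \<inter> topspace X = {x \<in> topspace X. f x ` K \<subseteq> U}" using assms(1) KU(1) by auto
  thus "openin X (f -` B \<inter> topspace X)" using assms(2)[OF KU(2,3)] by simp
qed

lemma circle_eps:
  assumes "compactin circle_top Kc" "openin circle_top U" "Kc \<subseteq> U"
  shows "\<exists>e>0. \<forall>z\<in>Kc. \<forall>w\<in>S1. cmod (w - z) < e \<longrightarrow> w \<in> U"
proof -
  obtain U' where U': "open U'" "U = U' \<inter> S1" using assms(2) openin_circle by blast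
  have "compact Kc" using assms(1) unfolding circle_top_def compactin_subtopology by simp
  moreover have "Kc \<subseteq> U'" using assms(3) U' by blast
  ultimately obtain e where e: "e > 0" "(\<Union>x\<in>Kc. ball x e) \<subseteq> U'"
    using compact_subset_open_imp_ball_epsilon_subset U'(1) by metis
  have "\<forall>z\<in>Kc. \<forall>w\<in>S1. cmod (w - z) < e \<longrightarrow> w \<in> U"
  proof (intro ballI impI)
    fix z w assume z: "z \<in> Kc" and w: "w \<in> S1" and d: "cmod (w - z) < e"
    have "w \<in> ball z e" using d by (simp add: dist_norm norm_minus_commute)
    hence "w \<in> U'" using e(2) z by blast
    thus "w \<in> U" using U'(2) w by simp
  qed
  thus ?thesis using e(1) by blast
qed

context atg
begin

lemma char_prod:
  assumes a: "xi \<in> characters G T" and b: "ph \<in> characters G T"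
  shows "(\<lambda>x\<in>carrier G. xi x * ph x) \<in> characters G T"
proof (rule char_intro)
  show "(\<lambda>x\<in>carrier G. xi x * ph x) \<in> hom G circle_group"
    unfolding hom_circle using ch_S[OF char_hom[OF a]] ch_S[OF char_hom[OF b]]
      ch_mult[OF char_hom[OF a]] ch_mult[OF char_hom[OF b]]
    by (auto simp: norm_mult)
  show "(\<lambda>x\<in>carrier G. xi x * ph x) \<in> extensional (carrier G)" by simp
  fix e :: real assume e: "e > 0"
  hence e2: "e/2 > 0" by simp
  obtain V1 where V1: "openin T V1" "\<one> \<in> V1" "\<forall>v\<in>V1. cmod (xi v - 1) < e/2"
    using char_cont_at1[OF a e2] by blast
  obtain V2 where V2: "openin T V2" "\<one> \<in> V2" "\<forall>v\<in>V2. cmod (ph v - 1) < e/2"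
    using char_cont_at1[OF b e2] by blast
  show "\<exists>V. openin T V \<and> \<one> \<in> V \<and> (\<forall>v\<in>V. cmod ((\<lambda>x\<in>carrier G. xi x * ph x) v - 1) < e)"
  proof (intro exI conjI ballI)
    fix v assume v: "v \<in> V1 \<inter> V2"
    have vc: "v \<in> carrier G" using v openin_subset[OF V1(1)] by auto
    have "cmod (xi v * ph v - 1 * 1) \<le> cmod (xi v - 1) + cmod (ph v - 1)"
      by (rule prod_close) (use ch_norm[OF char_hom[OF b] vc] in simp_all)
    moreover have "cmod (xi v - 1) < e/2" "cmod (ph v - 1) < e/2" using v V1 V2 by auto
    ultimately show "cmod ((\<lambda>x\<in>carrier G. xi x * ph x) v - 1) < e" using vc by simp
  qed (use V1 V2 in \<open>auto simp: openin_Int\<close>)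
qed

lemma eval_char:
  assumes a: "a \<in> carrier G"
  shows "eval_map G T a \<in> characters (dual_group G T) (dual_top G T)"
  unfolding characters_def
proof (intro CollectI conjI)
  show "eval_map G T a \<in> hom (dual_group G T) circle_group"
    unfolding hom_def
  proof (intro CollectI conjI ballI)
    show "eval_map G T a \<in> carrier (dual_group G T) \<rightarrow> carrier circle_group"
      using ch_S[OF char_hom] a by (auto simp: eval_map_def dual_group_def circle_group_def)
    fix x y assume x: "x \<in> carrier (dual_group G T)" and y: "y \<in> carrier (dual_group G T)"
    have xc: "x \<in> characters G T" and yc: "y \<in> characters G T" using x y by (simp_all add: dual_group_def)
    have "(\<lambda>z\<in>carrier G. x z * y z) \<in> characters G T" by (rule char_prod[OF xc yc])
    thus "eval_map G T a (x \<otimes>\<^bsub>dual_group G T\<^esub> y) = eval_map G T a x \<otimes>\<^bsub>circle_group\<^esub> eval_map G T a y"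
      using xc yc a by (simp add: eval_map_def dual_group_def circle_group_def)
  qed
  show "continuous_map (dual_top G T) circle_top (eval_map G T a)"
    unfolding continuous_map_def
  proof (intro conjI allI impI)
    show "eval_map G T a \<in> topspace (dual_top G T) \<rightarrow> topspace circle_top"
      using ch_S[OF char_hom] a by (auto simp: eval_map_def)
    fix U assume U: "openin circle_top U"
    have "{x \<in> topspace (dual_top G T). eval_map G T a x \<in> U} = {ch \<in> characters G T. ch ` {a} \<subseteq> U}"
      by (auto simp: eval_map_def)
    moreover have "openin (dual_top G T) {ch \<in> characters G T. ch ` {a} \<subseteq> U}"
      by (rule openin_dual_basic) (use a U in simp_all)
    ultimately show "openin (dual_top G T) {x \<in> topspace (dual_top G T). eval_map G T a x \<in> U}" by simp
  qed
  show "eval_map G T a \<in> extensional (carrier (dual_group G T))"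
    by (simp add: eval_map_def dual_group_def)
qed

lemma equi_from_alpha:
  assumes al: "continuous_map T (bidual_top G T) (eval_map G T)"
    and C: "compactin (dual_top G T) C" and e: "e > 0"
  shows "\<exists>V. openin T V \<and> \<one> \<in> V \<and> (\<forall>v\<in>V. \<forall>xi\<in>C. cmod (xi v - 1) < e)"
proof -
  define U where "U = ball 1 e \<inter> S1"
  have oU: "openin circle_top U" unfolding U_def openin_circle by blast
  define B where "B = {ch \<in> characters (dual_group G T) (dual_top G T). ch ` C \<subseteq> U}"
  have oB: "openin (bidual_top G T) B" unfolding B_def bidual_top_def
    by (rule openin_dual_basic[OF C oU])
  define V where "V = {x \<in> topspace T. eval_map G T x \<in> B}"
  have oV: "openin T V" unfolding V_def by (rule openin_continuous_map_preimage[OF al oB])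
  have Cs: "C \<subseteq> characters G T" using compactin_subset_topspace[OF C] by simp
  have "eval_map G T \<one> \<in> B"
    unfolding B_def
  proof (intro CollectI conjI)
    show "eval_map G T \<one> \<in> characters (dual_group G T) (dual_top G T)" by (rule eval_char) simp
    show "eval_map G T \<one> ` C \<subseteq> U"
    proof
      fix w assume "w \<in> eval_map G T \<one> ` C"
      then obtain ch where ch: "ch \<in> C" "w = eval_map G T \<one> ch" by blast
      have "w = ch \<one>" using ch Cs by (auto simp: eval_map_def)
      also have "\<dots> = 1" using ch_one[OF char_hom] ch Cs by blast
      finally show "w \<in> U" unfolding U_def using e by simp
    qed
  qed
  hence "\<one> \<in> V" unfolding V_def by simp
  moreover have "\<forall>v\<in>V. \<forall>xi\<in>C. cmod (xi v - 1) < e"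
  proof (intro ballI)
    fix v ch assume v: "v \<in> V" and ch: "ch \<in> C"
    have "eval_map G T v ` C \<subseteq> U" using v unfolding V_def B_def by simp
    hence "eval_map G T v ch \<in> U" using ch by blast
    hence "ch v \<in> U" using ch Cs by (auto simp: eval_map_def)
    thus "cmod (ch v - 1) < e" unfolding U_def by (simp add: dist_norm norm_minus_commute)
  qed
  ultimately show ?thesis using oV by blast
qed

end

context dsub
begin

abbreviation "rr \<equiv> (\<lambda>ch. restrict ch D)"

lemma r_hom: "rr \<in> hom (dual_group G T) (dual_group GD TD)"
  unfolding hom_def
proof (intro CollectI conjI ballI)
  show "rr \<in> carrier (dual_group G T) \<rightarrow> carrier (dual_group GD TD)"
    using restrict_char by (auto simp: dual_group_def)
  fix x y assume "x \<in> carrier (dual_group G T)" "y \<in> carrier (dual_group G T)"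
  show "rr (x \<otimes>\<^bsub>dual_group G T\<^esub> y) = rr x \<otimes>\<^bsub>dual_group GD TD\<^esub> rr y"
    using Dsub by (auto simp: dual_group_def restrict_def fun_eq_iff)
qed

lemma r_cont: "continuous_map (dual_top G T) (dual_top GD TD) rr"
proof (rule cont_into_dual)
  show "rr \<in> topspace (dual_top G T) \<rightarrow> characters GD TD" using restrict_char by auto
  fix K U assume K: "compactin TD K" and U: "openin circle_top U"
  have KD: "K \<subseteq> D" and KT: "compactin T K" using K by (simp_all add: compactin_subtopology)
  have "{x \<in> topspace (dual_top G T). rr x ` K \<subseteq> U} = {ch \<in> characters G T. ch ` K \<subseteq> U}"
    using KD by auto
  thus "openin (dual_top G T) {x \<in> topspace (dual_top G T). rr x ` K \<subseteq> U}"
    using openin_dual_basic[OF KT U] by simp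
qed

definition equi :: "('a \<Rightarrow> complex) set \<Rightarrow> bool" where
  "equi K \<longleftrightarrow> (\<forall>e>0. \<exists>V. openin T V \<and> \<one> \<in> V \<and> (\<forall>v\<in>V. \<forall>xi\<in>K. cmod (xi v - 1) \<le> e))"

lemma equi_K:
  assumes al: "continuous_map TD (bidual_top GD TD) (eval_map GD TD)"
    and K: "K \<subseteq> characters G T" and cK: "compactin (dual_top GD TD) (rr ` K)"
  shows "equi K"
  unfolding equi_def
proof (intro allI impI)
  fix e :: real assume e: "e > 0"
  obtain V' where V': "openin TD V'" "\<one> \<in> V'" "\<forall>v\<in>V'. \<forall>xi\<in>rr ` K. cmod (xi v - 1) < e"
    using DD.equi_from_alpha[OF al cK e] by auto
  obtain O' where O': "openin T O'" "V' = O' \<inter> D" using V'(1) openin_TD by blast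
  have "\<forall>v\<in>O'. \<forall>xi\<in>K. cmod (xi v - 1) \<le> e"
  proof (intro ballI)
    fix v ch assume v: "v \<in> O'" and ch: "ch \<in> K"
    have chc: "ch \<in> characters G T" using ch K by blast
    define F where "F = {x \<in> topspace T. ch x \<in> cball 1 e}"
    have cF: "closedin T F" unfolding F_def
      by (rule closedin_continuous_map_preimage[OF cont_circle_eucl[OF char_cont[OF chc]]]) simp
    have "O' \<inter> D \<subseteq> F"
    proof
      fix d assume d: "d \<in> O' \<inter> D"
      have "restrict ch D \<in> rr ` K" using ch by blast
      hence "cmod (restrict ch D d - 1) < e" using V'(3) O'(2) d by blast
      thus "d \<in> F" unfolding F_def using d Dsub by (auto simp: dist_norm norm_minus_commute)
    qed
    from dense_closed[OF dense O'(1) cF this] have "v \<in> F" using v by blast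
    thus "cmod (ch v - 1) \<le> e" unfolding F_def by (simp add: dist_norm norm_minus_commute)
  qed
  moreover have "\<one> \<in> O'" using V'(2) O'(2) by blast
  ultimately show "\<exists>V. openin T V \<and> \<one> \<in> V \<and> (\<forall>v\<in>V. \<forall>xi\<in>K. cmod (xi v - 1) \<le> e)"
    using O'(1) by blast
qed

lemma compact_back:
  assumes K: "K \<subseteq> characters G T" and eq: "equi K" and cK: "compactin (dual_top GD TD) (rr ` K)"
  shows "compactin (dual_top G T) K"
proof -
  define X where "X = subtopology (dual_top GD TD) (rr ` K)"
  have cX: "compactin X (rr ` K)" unfolding X_def using cK by (simp add: compactin_subtopology)
  have rK: "rr ` K \<subseteq> characters GD TD" using compactin_subset_topspace[OF cK] by simp
  have tX: "topspace X = rr ` K" unfolding X_def using rK by auto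
  have extK: "ext ` (rr ` K) = K"
  proof -
    have "ext ` (rr ` K) = (\<lambda>ch. ext (rr ch)) ` K" by (simp add: image_image)
    also have "\<dots> = K" using K ext_restrict by (auto simp: image_iff) (metis subsetD)
    finally show ?thesis .
  qed
  have "continuous_map X (dual_top G T) ext"
  proof (rule cont_into_dual)
    show "ext \<in> topspace X \<rightarrow> characters G T" unfolding tX using ext_char rK by auto
    fix C U0 assume C: "compactin T C" and U0: "openin circle_top U0"
    define P where "P = {x \<in> topspace X. ext x ` C \<subseteq> U0}"
    show "openin X P"
    proof (subst openin_subopen, intro ballI)
      fix psi0 assume p0: "psi0 \<in> P"
      hence p0K: "psi0 \<in> rr ` K" and p0C: "ext psi0 ` C \<subseteq> U0" unfolding P_def tX by auto
      then obtain chi0 where chi0: "chi0 \<in> K" "psi0 = rr chi0" by blast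
      have chi0c: "chi0 \<in> characters G T" using chi0 K by blast
      have e0: "ext psi0 = chi0" using chi0 ext_restrict[OF chi0c] by simp
      have Cs: "C \<subseteq> carrier G" using compactin_subset_topspace[OF C] by simp
      have "compactin circle_top (chi0 ` C)" by (rule image_compactin[OF C char_cont[OF chi0c]])
      then obtain e where e: "e > 0" "\<forall>z\<in>chi0 ` C. \<forall>w\<in>S1. cmod (w - z) < e \<longrightarrow> w \<in> U0"
        using circle_eps U0 p0C e0 by metis
      have e4: "e/4 > 0" using e by simp
      obtain O' where O': "openin T O'" "\<one> \<in> O'" "\<forall>v\<in>O'. \<forall>xi\<in>K. cmod (xi v - 1) \<le> e/4"
        using eq e4 unfolding equi_def by blast
      obtain W where W: "openin T W" "\<one> \<in> W" "W \<subseteq> O'" "\<forall>a\<in>W. \<forall>b\<in>W. a \<otimes> b \<in> O' \<and> inv a \<otimes> b \<in> O'"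
        using split_nbhd[OF O'(1) O'(2)] by blast
      have "\<exists>F. finite F \<and> F \<subseteq> (\<lambda>x. nb x W) ` C \<and> C \<subseteq> \<Union>F"
      proof -
        have "\<forall>U\<in>(\<lambda>x. nb x W) ` C. openin T U" using openin_nb W(1) Cs by auto
        moreover have "C \<subseteq> \<Union>((\<lambda>x. nb x W) ` C)" using nb_self W(2) Cs by blast
        ultimately have pre: "(\<forall>U\<in>(\<lambda>x. nb x W) ` C. openin T U) \<and> C \<subseteq> \<Union>((\<lambda>x. nb x W) ` C)" by (rule conjI)
        have "\<forall>U. (\<forall>V\<in>U. openin T V) \<and> C \<subseteq> \<Union>U \<longrightarrow> (\<exists>F. finite F \<and> F \<subseteq> U \<and> C \<subseteq> \<Union>F)"
          using C unfolding compactin_def by (rule conjunct2)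
        hence "(\<forall>V\<in>(\<lambda>x. nb x W) ` C. openin T V) \<and> C \<subseteq> \<Union>((\<lambda>x. nb x W) ` C) \<longrightarrow>
          (\<exists>F. finite F \<and> F \<subseteq> (\<lambda>x. nb x W) ` C \<and> C \<subseteq> \<Union>F)" by (rule spec)
        thus ?thesis using pre by (rule mp)
      qed
      then obtain F where F: "finite F" "F \<subseteq> (\<lambda>x. nb x W) ` C" "C \<subseteq> \<Union>F" by blast
      obtain Fc where Fc: "Fc \<subseteq> C" "finite Fc" "F = (\<lambda>x. nb x W) ` Fc"
        using finite_subset_image[OF F(1) F(2)] by blast
      have "\<forall>x\<in>Fc. \<exists>d. d \<in> D \<and> inv x \<otimes> d \<in> W"
      proof
        fix x assume "x \<in> Fc"
        hence xc: "x \<in> carrier G" using Fc(1) Cs by blast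
        show "\<exists>d. d \<in> D \<and> inv x \<otimes> d \<in> W" using dense_nb[OF xc W(1) W(2)] by (simp add: Bex_def)
      qed
      hence "\<exists>ds. \<forall>x\<in>Fc. ds x \<in> D \<and> inv x \<otimes> ds x \<in> W" by (rule bchoice)
      then obtain ds where ds: "\<forall>x\<in>Fc. ds x \<in> D \<and> inv x \<otimes> ds x \<in> W" by blast
      define N where "N = {\<psi> \<in> characters GD TD. \<forall>x\<in>Fc. \<psi> (ds x) \<in> ball (psi0 (ds x)) (e/4) \<inter> S1}"
      define Bx where "Bx x = {\<psi> \<in> characters GD TD. \<psi> ` {ds x} \<subseteq> ball (psi0 (ds x)) (e/4) \<inter> S1}" for x
      have "N = (\<Inter>x\<in>Fc. Bx x) \<inter> topspace (dual_top GD TD)"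
        unfolding N_def Bx_def by auto
      moreover have "openin (dual_top GD TD) ((\<Inter>x\<in>Fc. Bx x) \<inter> topspace (dual_top GD TD))"
      proof (rule openin_INT[OF Fc(2)])
        fix x assume x: "x \<in> Fc"
        show "openin (dual_top GD TD) (Bx x)" unfolding Bx_def
        proof (rule openin_dual_basic)
          have dx: "ds x \<in> D" using ds x by blast
          show "compactin TD {ds x}" using dx Dsub by auto
          show "openin circle_top (ball (psi0 (ds x)) (e / 4) \<inter> S1)" unfolding openin_circle by blast
        qed
      qed
      ultimately have oN: "openin (dual_top GD TD) N" by simp
      have p0c: "psi0 \<in> characters GD TD" using p0K rK by blast
      have p0N: "psi0 \<in> N" unfolding N_def using p0c chD_S[OF p0c] ds e4 by auto
      have NP: "N \<inter> rr ` K \<subseteq> P"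
      proof
        fix psi assume psi: "psi \<in> N \<inter> rr ` K"
        then obtain chi where chi: "chi \<in> K" "psi = rr chi" by blast
        have chic: "chi \<in> characters G T" using chi K by blast
        have ep: "ext psi = chi" using chi ext_restrict[OF chic] by simp
        have "chi ` C \<subseteq> U0"
        proof
          fix w assume "w \<in> chi ` C"
          then obtain c where c: "c \<in> C" "w = chi c" by blast
          have cc: "c \<in> carrier G" using c Cs by blast
          obtain x where x: "x \<in> Fc" "inv x \<otimes> c \<in> W" using F(3) c(1) Fc(3) unfolding nb_def by auto
          have xc: "x \<in> carrier G" using x Fc(1) Cs by blast
          define d where "d = ds x"
          have d: "d \<in> D" "inv x \<otimes> d \<in> W" using ds x unfolding d_def by auto
          have dc: "d \<in> carrier G" using d Dsub by blast
          have "inv (inv x \<otimes> d) \<otimes> (inv x \<otimes> c) \<in> O'" using W(4) d(2) x(2) by blast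
          hence u: "inv d \<otimes> c \<in> O'" using inv_shift1[OF xc dc cc] by simp
          have uc: "inv d \<otimes> c \<in> carrier G" using dc cc by simp
          have s1: "chi c = chi d * chi (inv d \<otimes> c)" by (rule ch_shift[OF char_hom[OF chic] dc cc])
          have s2: "chi0 c = chi0 d * chi0 (inv d \<otimes> c)" by (rule ch_shift[OF char_hom[OF chi0c] dc cc])
          have "cmod (chi c - chi0 c) \<le> cmod (chi d - chi0 d) + cmod (chi (inv d \<otimes> c) - chi0 (inv d \<otimes> c))"
            unfolding s1 s2
            by (rule prod_close) (use ch_norm[OF char_hom[OF chic] uc] ch_norm[OF char_hom[OF chi0c] dc] in simp_all)
          moreover have "cmod (chi (inv d \<otimes> c) - chi0 (inv d \<otimes> c)) \<le> cmod (chi (inv d \<otimes> c) - 1) + cmod (chi0 (inv d \<otimes> c) - 1)"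
            using norm_triangle_ineq4[of "chi (inv d \<otimes> c) - 1" "chi0 (inv d \<otimes> c) - 1"] by simp
          moreover have "cmod (chi (inv d \<otimes> c) - 1) \<le> e/4" using O'(3) u chi(1) by blast
          moreover have "cmod (chi0 (inv d \<otimes> c) - 1) \<le> e/4" using O'(3) u chi0(1) by blast
          moreover have "cmod (chi d - chi0 d) < e/4"
          proof -
            have "psi d \<in> ball (psi0 d) (e/4)" using psi x unfolding N_def d_def by auto
            moreover have "psi d = chi d" "psi0 d = chi0 d" using chi(2) chi0(2) d(1) by auto
            ultimately show ?thesis by (simp add: dist_norm norm_minus_commute)
          qed
          ultimately have "cmod (chi c - chi0 c) < e" using e by linarith
          moreover have "chi c \<in> S1" using ch_S[OF char_hom[OF chic] cc] .
          moreover have "chi0 c \<in> chi0 ` C" using c(1) by blast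
          ultimately show "w \<in> U0" using e(2) c(2) by blast
        qed
        thus "psi \<in> P" unfolding P_def tX using psi ep by auto
      qed
      have "openin X (N \<inter> rr ` K)" unfolding X_def by (rule openin_subtopology_Int[OF oN])
      thus "\<exists>T'. openin X T' \<and> psi0 \<in> T' \<and> T' \<subseteq> P" using p0N p0K NP by blast
    qed
  qed
  from image_compactin[OF cX this] show ?thesis unfolding extK .
qed

end

lemma Re_mult_nonneg:
  fixes z w :: complex
  assumes "Re z \<ge> 0" "Re (z*z) \<ge> 0" "Re w \<ge> 0" "Re (w*w) \<ge> 0"
  shows "Re (z*w) \<ge> 0"
proof -
  have "(Im z)^2 \<le> (Re z)^2" using assms(2) by (simp add: power2_eq_square)
  hence a: "\<bar>Im z\<bar> \<le> Re z" using assms(1) abs_le_square_iff[of "Im z" "Re z"] by simp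
  have "(Im w)^2 \<le> (Re w)^2" using assms(4) by (simp add: power2_eq_square)
  hence b: "\<bar>Im w\<bar> \<le> Re w" using assms(3) abs_le_square_iff[of "Im w" "Re w"] by simp
  have "Im z * Im w \<le> \<bar>Im z\<bar> * \<bar>Im w\<bar>" by (simp add: abs_mult[symmetric])
  also have "\<dots> \<le> Re z * Re w" using a b by (intro mult_mono) auto
  finally show ?thesis by simp
qed

context dsub
begin

lemma alpha_A_cont:
  assumes al: "continuous_map TD (bidual_top GD TD) (eval_map GD TD)"
  shows "continuous_map T (bidual_top G T) (eval_map G T)"
  unfolding bidual_top_def
proof (rule cont_into_dual)
  show "eval_map G T \<in> topspace T \<rightarrow> characters (dual_group G T) (dual_top G T)"
    using eval_char by auto
  fix C U0 assume C: "compactin (dual_top G T) C" and U0: "openin circle_top U0"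
  have Cs: "C \<subseteq> characters G T" using compactin_subset_topspace[OF C] by simp
  show "openin T {a \<in> topspace T. eval_map G T a ` C \<subseteq> U0}"
  proof (subst openin_subopen, intro ballI)
    fix a0 assume "a0 \<in> {a \<in> topspace T. eval_map G T a ` C \<subseteq> U0}"
    hence a0: "a0 \<in> carrier G" "eval_map G T a0 ` C \<subseteq> U0" by auto
    have "continuous_map (dual_top G T) circle_top (eval_map G T a0)"
      using eval_char[OF a0(1)] unfolding characters_def by simp
    hence "compactin circle_top (eval_map G T a0 ` C)" by (rule image_compactin[OF C])
    then obtain e where e: "e > 0" "\<forall>z\<in>eval_map G T a0 ` C. \<forall>w\<in>S1. cmod (w - z) < e \<longrightarrow> w \<in> U0"
      using circle_eps U0 a0(2) by metis
    have e2: "e/2 > 0" using e by simp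
    have "compactin (dual_top GD TD) (rr ` C)" by (rule image_compactin[OF C r_cont])
    hence "equi C" by (rule equi_K[OF al Cs])
    then obtain O' where O': "openin T O'" "\<one> \<in> O'" "\<forall>v\<in>O'. \<forall>xi\<in>C. cmod (xi v - 1) \<le> e/2"
      using e2 unfolding equi_def by blast
    have "nb a0 O' \<subseteq> {a \<in> topspace T. eval_map G T a ` C \<subseteq> U0}"
    proof
      fix a assume "a \<in> nb a0 O'"
      hence a: "a \<in> carrier G" "inv a0 \<otimes> a \<in> O'" unfolding nb_def by auto
      have "eval_map G T a ` C \<subseteq> U0"
      proof
        fix w assume "w \<in> eval_map G T a ` C"
        then obtain ch where ch: "ch \<in> C" "w = eval_map G T a ch" by blast
        have chc: "ch \<in> characters G T" using ch Cs by blast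
        have w: "w = ch a" using ch chc by (simp add: eval_map_def)
        have "cmod (ch a - ch a0) = cmod (ch (inv a0 \<otimes> a) - 1)" by (rule ch_dist[OF char_hom[OF chc] a0(1) a(1)])
        also have "\<dots> \<le> e/2" using O'(3) a(2) ch(1) by blast
        finally have "cmod (ch a - ch a0) < e" using e by linarith
        moreover have "ch a \<in> S1" using ch_S[OF char_hom[OF chc] a(1)] .
        moreover have "ch a0 \<in> eval_map G T a0 ` C" using ch chc by (force simp: eval_map_def)
        ultimately show "w \<in> U0" using e(2) w by blast
      qed
      thus "a \<in> {a \<in> topspace T. eval_map G T a ` C \<subseteq> U0}" using a by simp
    qed
    moreover have "openin T (nb a0 O')" using openin_nb a0(1) O'(1) by simp
    moreover have "a0 \<in> nb a0 O'" using nb_self a0(1) O'(2) by simp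
    ultimately show "\<exists>T'. openin T T' \<and> a0 \<in> T' \<and> T' \<subseteq> {a \<in> topspace T. eval_map G T a ` C \<subseteq> U0}"
      by blast
  qed
qed

lemma lqc:
  assumes lq: "locally_quasi_convex GD TD"
  shows "locally_quasi_convex G T"
  unfolding locally_quasi_convex_def
proof (intro conjI allI impI)
  fix U assume "nhd0 G T U"
  then obtain V where U: "U \<subseteq> carrier G" "openin T V" "\<one> \<in> V" "V \<subseteq> U" unfolding nhd0_def by auto
  have "U \<subseteq> prepolar G T (polar G T U)"
    using U(1) unfolding prepolar_def polar_def by auto
  thus "nhd0 G T (prepolar G T (polar G T U))"
    unfolding nhd0_def using U by (intro conjI exI[of _ V]) (auto simp: prepolar_def)
next
  fix W assume "nhd0 G T W"
  then obtain W0 where W0: "W \<subseteq> carrier G" "openin T W0" "\<one> \<in> W0" "W0 \<subseteq> W" unfolding nhd0_def by auto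
  obtain W1 where W1: "openin T W1" "\<one> \<in> W1" "W1 \<subseteq> W0" "\<forall>a\<in>W1. \<forall>b\<in>W1. a \<otimes> b \<in> W0 \<and> inv a \<otimes> b \<in> W0"
    using split_nbhd[OF W0(2) W0(3)] by blast
  have "nhd0 GD TD (W1 \<inter> D)"
    unfolding nhd0_def
  proof (intro conjI exI[of _ "W1 \<inter> D"])
    show "W1 \<inter> D \<subseteq> topspace TD" using Dsub by auto
    show "openin TD (W1 \<inter> D)" using W1(1) openin_TD by blast
    show "\<one>\<^bsub>GD\<^esub> \<in> W1 \<inter> D" using W1(2) D_one by simp
  qed simp
  then obtain UD where UD: "nhd0 GD TD UD" "prepolar GD TD (polar GD TD UD) \<subseteq> W1 \<inter> D"
    using lq unfolding locally_quasi_convex_def by blast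
  then obtain VD where VD: "openin TD VD" "\<one> \<in> VD" "VD \<subseteq> UD" unfolding nhd0_def by auto
  then obtain V where V: "openin T V" "VD = V \<inter> D" using openin_TD by blast
  have oneV: "\<one> \<in> V" using VD(2) V(2) by blast
  obtain V1 where V1: "openin T V1" "\<one> \<in> V1" "V1 \<subseteq> V" "\<forall>a\<in>V1. \<forall>b\<in>V1. a \<otimes> b \<in> V \<and> inv a \<otimes> b \<in> V"
    using split_nbhd[OF V(1) oneV] by blast
  define W1' where "W1' = {y \<in> topspace T. inv y \<in> W1}"
  have oW1': "openin T W1'" unfolding W1'_def by (rule openin_continuous_map_preimage[OF cinv W1(1)])
  have oneW1': "\<one> \<in> W1'" unfolding W1'_def using W1(2) by simp
  have "nhd0 G T V1" unfolding nhd0_def using V1 openin_subset[OF V1(1)] by auto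
  moreover have "prepolar G T (polar G T V1) \<subseteq> W"
  proof
    fix x assume x: "x \<in> prepolar G T (polar G T V1)"
    hence xc: "x \<in> carrier G" and xP: "\<forall>ch\<in>polar G T V1. ch x \<in> Lambda1" unfolding prepolar_def by auto
    have "openin T (V1 \<inter> W1')" using V1(1) oW1' by (simp add: openin_Int)
    then obtain d where d: "d \<in> D" "inv x \<otimes> d \<in> V1 \<inter> W1'" using dense_nb[OF xc] V1(2) oneW1' by blast
    have dc: "d \<in> carrier G" using d Dsub by blast
    define n where "n = inv x \<otimes> d"
    have nc: "n \<in> carrier G" unfolding n_def using xc dc by simp
    have nV1: "n \<in> V1" and nW: "inv n \<in> W1" using d unfolding n_def W1'_def by auto
    have "d \<in> prepolar GD TD (polar GD TD UD)"
      unfolding prepolar_def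
    proof (intro CollectI conjI ballI)
      show "d \<in> carrier GD" using d by simp
      fix psi assume psi: "psi \<in> polar GD TD UD"
      hence psic: "psi \<in> characters GD TD" and psiU: "psi ` UD \<subseteq> Lambda1" unfolding polar_def by auto
      define chi where "chi = ext psi"
      have chic: "chi \<in> characters G T" unfolding chi_def by (rule ext_char[OF psic])
      have chiD: "\<And>y. y \<in> D \<Longrightarrow> chi y = psi y" unfolding chi_def using ext_on_D[OF psic] by simp
      define F where "F = {y \<in> topspace T. chi y \<in> Lambda1}"
      have cF: "closedin T F" unfolding F_def
        by (rule closedin_continuous_map_preimage[OF char_cont[OF chic] closedin_Lambda1])
      have "V \<inter> D \<subseteq> F"
      proof
        fix y assume y: "y \<in> V \<inter> D"
        hence "y \<in> UD" using VD(3) V(2) by blast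
        hence "psi y \<in> Lambda1" using psiU by blast
        thus "y \<in> F" unfolding F_def using y chiD Dsub by auto
      qed
      from dense_closed[OF dense V(1) cF this]
      have chiV: "\<And>y. y \<in> V \<Longrightarrow> chi y \<in> Lambda1" unfolding F_def by blast
      have p1: "chi \<in> polar G T V1" unfolding polar_def using chic chiV V1(3) by auto
      define chi2 where "chi2 = (\<lambda>y\<in>carrier G. chi y * chi y)"
      have chi2c: "chi2 \<in> characters G T" unfolding chi2_def by (rule char_prod[OF chic chic])
      have "chi2 ` V1 \<subseteq> Lambda1"
      proof
        fix w assume "w \<in> chi2 ` V1"
        then obtain v where v: "v \<in> V1" "w = chi2 v" by blast
        have vc: "v \<in> carrier G" using v openin_subset[OF V1(1)] by auto
        have "w = chi (v \<otimes> v)" using v vc ch_mult[OF char_hom[OF chic] vc vc] unfolding chi2_def by simp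
        moreover have "v \<otimes> v \<in> V" using V1(4) v(1) by blast
        ultimately show "w \<in> Lambda1" using chiV by simp
      qed
      hence p2: "chi2 \<in> polar G T V1" unfolding polar_def using chi2c by simp
      have "chi x \<in> Lambda1" "chi2 x \<in> Lambda1" using xP p1 p2 by auto
      hence zx: "Re (chi x) \<ge> 0" "Re (chi x * chi x) \<ge> 0" unfolding Lambda1_eq chi2_def using xc by auto
      have "chi n \<in> Lambda1" "chi2 n \<in> Lambda1" using chiV V1(3) nV1 p2 unfolding polar_def by auto
      hence zn: "Re (chi n) \<ge> 0" "Re (chi n * chi n) \<ge> 0" unfolding Lambda1_eq chi2_def using nc by auto
      have "chi d = chi x * chi n" unfolding n_def by (rule ch_shift[OF char_hom[OF chic] xc dc])
      hence "Re (chi d) \<ge> 0" using Re_mult_nonneg[OF zx zn] by simp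
      moreover have "chi d \<in> S1" using ch_S[OF char_hom[OF chic] dc] .
      ultimately have "chi d \<in> Lambda1" unfolding Lambda1_eq by simp
      thus "psi d \<in> Lambda1" using chiD d(1) by simp
    qed
    hence "d \<in> W1" using UD(2) by blast
    hence "d \<otimes> inv n \<in> W0" using W1(4) nW by blast
    moreover have "d \<otimes> inv n = x"
    proof -
      have "inv n = inv d \<otimes> x" unfolding n_def using xc dc by (simp add: inv_mult_group)
      thus ?thesis using xc dc by (simp add: m_assoc[symmetric])
    qed
    ultimately show "x \<in> W" using W0(4) by auto
  qed
  ultimately show "\<exists>U. nhd0 G T U \<and> prepolar G T (polar G T U) \<subseteq> W" by blast
qed

end

theorem mainTheorem5:
  fixes G :: "'a monoid" and T :: "'a topology" and D :: "'a set"
  assumes "ab_top_group G T"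
    and "subgroup D G"
    and "T closure_of D = topspace T"
  defines "GD \<equiv> G\<lparr>carrier := D\<rparr>" and "TD \<equiv> subtopology T D"
    and "r \<equiv> (\<lambda>ch. restrict ch D)"
  shows "(bij_betw r (characters G T) (characters GD TD)
          \<and> r \<in> hom (dual_group G T) (dual_group GD TD)
          \<and> continuous_map (dual_top G T) (dual_top GD TD) r)
       \<and> (continuous_map TD (bidual_top GD TD) (eval_map GD TD) \<longrightarrow>
           (\<forall>K. K \<subseteq> characters G T \<longrightarrow>
                 (compactin (dual_top G T) K \<longleftrightarrow> compactin (dual_top GD TD) (r ` K)))
           \<and> continuous_map T (bidual_top G T) (eval_map G T))
       \<and> (locally_quasi_convex GD TD \<longrightarrow> locally_quasi_convex G T)"
proof -
  interpret dsub G T D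
    by (intro dsub.intro atg.intro dsub_axioms.intro) (use assms(1-3) in auto)
  have rb: "bij_betw r (characters G T) (characters GD TD)"
    unfolding GD_def TD_def r_def by (rule r_bij)
  have rh: "r \<in> hom (dual_group G T) (dual_group GD TD)"
    unfolding GD_def TD_def r_def by (rule r_hom)
  have rc: "continuous_map (dual_top G T) (dual_top GD TD) r"
    unfolding GD_def TD_def r_def by (rule r_cont)
  have pb: "(\<forall>K. K \<subseteq> characters G T \<longrightarrow>
                 (compactin (dual_top G T) K \<longleftrightarrow> compactin (dual_top GD TD) (r ` K)))
           \<and> continuous_map T (bidual_top G T) (eval_map G T)"
    if al0: "continuous_map TD (bidual_top GD TD) (eval_map GD TD)"
  proof (intro conjI allI impI)
    have al: "continuous_map (subtopology T D) (bidual_top (G\<lparr>carrier := D\<rparr>) (subtopology T D))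
      (eval_map (G\<lparr>carrier := D\<rparr>) (subtopology T D))" using al0 unfolding GD_def TD_def .
    show "continuous_map T (bidual_top G T) (eval_map G T)" by (rule alpha_A_cont[OF al])
    fix K assume K: "K \<subseteq> characters G T"
    show "compactin (dual_top G T) K \<longleftrightarrow> compactin (dual_top GD TD) (r ` K)"
      unfolding GD_def TD_def r_def
    proof
      assume "compactin (dual_top G T) K"
      thus "compactin (dual_top (G\<lparr>carrier := D\<rparr>) (subtopology T D)) (rr ` K)"
        by (rule image_compactin[OF _ r_cont])
    next
      assume cK: "compactin (dual_top (G\<lparr>carrier := D\<rparr>) (subtopology T D)) (rr ` K)"
      show "compactin (dual_top G T) K" by (rule compact_back[OF K equi_K[OF al K cK] cK])
    qed
  qed
  have pc: "locally_quasi_convex G T" if "locally_quasi_convex GD TD"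
    using that unfolding GD_def TD_def by (rule lqc)
  show ?thesis using rb rh rc pb pc by blast
qed

end
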